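(* Let $n\ge 1$ and $u,v\in\mathsf{Tr}(n)$. Let $s:=\min(u_1,v_1)\cdots\min(u_n,v_n)$ and let $t$ be the word obtained from $s$ by replacing, for every pair of indices $i<j$ with $s_i=0$ and $s_j=1$, the letter $s_j$ by $0$ (i.e. changing every subword $01$ of $s$ into $00$). Then $t$ is the meet of $u$ and $v$ in $(\mathsf{Tr}(n),\preccurlyeq)$.
   Context: A triword of size $n$ is a word $u=u_1\cdots u_n$ with $u_i\in\{0,1,2\}$, $u_1\ne 2$, and such that $u_i=0$ implies $u_j\neq 1$ for all $j>i$ (i.e. no subword $01$, where a subword is obtained by deleting letters); $\mathsf{Tr}(n)$ is their set, ordered componentwise: $u\preccurlyeq v$ iff $u_i\le v_i$ for all $i\in[n]$. *)

theory Defs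
  imports Main
begin

text \<open>Words of size n are lists of naturals of length n; position i (1-based in the
paper) is list index i-1 here.\<close>

definition triword :: "nat \<Rightarrow> nat list \<Rightarrow> bool" where
  "triword n u \<longleftrightarrow> length u = n \<and> set u \<subseteq> {0,1,2} \<and> u ! 0 \<noteq> 2 \<and>
     (\<forall>i j. i < j \<and> j < n \<and> u ! i = 0 \<longrightarrow> u ! j \<noteq> 1)"

definition Tr :: "nat \<Rightarrow> nat list set" where
  "Tr n = {u. triword n u}"

definition tri_le :: "nat list \<Rightarrow> nat list \<Rightarrow> bool" where
  "tri_le u v \<longleftrightarrow> length u = length v \<and> (\<forall>i < length u. u ! i \<le> v ! i)"

definition is_meet_Tr :: "nat \<Rightarrow> nat list \<Rightarrow> nat list \<Rightarrow> nat list \<Rightarrow> bool" where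
  "is_meet_Tr n u v m \<longleftrightarrow> m \<in> Tr n \<and> tri_le m u \<and> tri_le m v \<and>
     (\<forall>w \<in> Tr n. tri_le w u \<and> tri_le w v \<longrightarrow> tri_le w m)"

end

theory Submission
  imports Defs
begin

theorem proposition1p5:
  fixes n :: nat and u v s t :: "nat list"
  assumes "n \<ge> 1"
    and "u \<in> Tr n" and "v \<in> Tr n"
    and "s = map (\<lambda>i. min (u ! i) (v ! i)) [0..<n]"
    and "t = map (\<lambda>j. if s ! j = 1 \<and> (\<exists>i < j. s ! i = 0) then 0 else s ! j) [0..<n]"
  shows "is_meet_Tr n u v t"
proof -
  have U: "length u = n" "set u \<subseteq> {0,1,2}" "u ! 0 \<noteq> 2"
    "\<And>i j. i < j \<Longrightarrow> j < n \<Longrightarrow> u ! i = 0 \<Longrightarrow> u ! j \<noteq> 1"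
    using assms(2) by (auto simp: Tr_def triword_def)
  have V: "length v = n" "set v \<subseteq> {0,1,2}" "v ! 0 \<noteq> 2"
    "\<And>i j. i < j \<Longrightarrow> j < n \<Longrightarrow> v ! i = 0 \<Longrightarrow> v ! j \<noteq> 1"
    using assms(3) by (auto simp: Tr_def triword_def)
  have sl: "length s = n" using assms(4) by simp
  have sn: "\<And>i. i < n \<Longrightarrow> s ! i = min (u ! i) (v ! i)" using assms(4) by simp
  have tl: "length t = n" using assms(5) by simp
  have tn: "\<And>j. j < n \<Longrightarrow> t ! j = (if s ! j = 1 \<and> (\<exists>i < j. s ! i = 0) then 0 else s ! j)"
    using assms(5) by simp
  have u3: "\<And>i. i < n \<Longrightarrow> u ! i \<in> {0,1,2}" using U(1,2) nth_mem by blast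
  have v3: "\<And>i. i < n \<Longrightarrow> v ! i \<in> {0,1,2}" using V(1,2) nth_mem by blast
  have ts: "\<And>j. j < n \<Longrightarrow> t ! j \<le> s ! j" using tn by simp
  have tTr: "t \<in> Tr n"
    unfolding Tr_def triword_def
  proof (intro CollectI conjI allI impI)
    show "length t = n" by (rule tl)
    show "set t \<subseteq> {0,1,2}"
    proof
      fix x assume "x \<in> set t"
      then obtain j where j: "j < n" "x = t ! j" using tl by (auto simp: in_set_conv_nth)
      then show "x \<in> {0,1,2}" using tn[OF j(1)] sn[OF j(1)] u3[OF j(1)] v3[OF j(1)]
        by (auto simp: min_def)
    qed
    show "t ! 0 \<noteq> 2" using tn[of 0] sn[of 0] U(3) V(3) assms(1) by (auto simp: min_def)
    fix i j assume h: "i < j \<and> j < n \<and> t ! i = 0"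
    show "t ! j \<noteq> 1"
    proof
      assume t1: "t ! j = 1"
      have in_: "i < n" using h by simp
      have "\<exists>k<j. s ! k = 0"
      proof (cases "s ! i = 0")
        case True then show ?thesis using h by blast
      next
        case False
        then obtain k where "k < i" "s ! k = 0" using tn[OF in_] h by (auto split: if_splits)
        then show ?thesis using h less_trans by blast
      qed
      then show False using t1 tn[of j] h by (auto split: if_splits)
    qed
  qed
  have le_u: "tri_le t u" unfolding tri_le_def using tl U(1) ts sn by (auto intro: le_trans)
  have le_v: "tri_le t v" unfolding tri_le_def using tl V(1) ts sn by (auto intro: le_trans)
  have great: "\<forall>w \<in> Tr n. tri_le w u \<and> tri_le w v \<longrightarrow> tri_le w t"
  proof (intro ballI impI)
    fix w assume wT: "w \<in> Tr n" and le: "tri_le w u \<and> tri_le w v"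
    have W: "length w = n"
      "\<And>i j. i < j \<Longrightarrow> j < n \<Longrightarrow> w ! i = 0 \<Longrightarrow> w ! j \<noteq> 1"
      using wT by (auto simp: Tr_def triword_def)
    have ws: "\<And>i. i < n \<Longrightarrow> w ! i \<le> s ! i"
      using le W(1) sn by (auto simp: tri_le_def)
    show "tri_le w t" unfolding tri_le_def
    proof (intro conjI allI impI)
      show "length w = length t" using W(1) tl by simp
      fix j assume "j < length w"
      then have j: "j < n" using W(1) by simp
      show "w ! j \<le> t ! j"
      proof (cases "s ! j = 1 \<and> (\<exists>i < j. s ! i = 0)")
        case True
        then obtain i where i: "i < j" "s ! i = 0" by blast
        have "w ! i = 0" using ws[of i] i j by simp
        then have "w ! j \<noteq> 1" using W(2) i j by blast
        moreover have "w ! j \<le> 1" using ws[OF j] True by simp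
        ultimately show ?thesis by simp
      next
        case False then have "t ! j = s ! j" using tn[OF j] by (simp only: if_False)
        then show ?thesis using ws[OF j] by simp
      qed
    qed
  qed
  show ?thesis unfolding is_meet_Tr_def using tTr le_u le_v great by blast
qed

end
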